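(* Let $G=(V,E)$ be a finite, connected, undirected graph with $n\ge2$ vertices. For the Moran process $(X_i)_{i\ge0}$ on $G$ with $r=1$, started from $X_0=\{x\}$ with $x$ chosen uniformly at random from $V$, the expected absorption time is at most $n^4\big(\phi(G)^2-\phi'_0\big)$, where $\phi'_0=\frac1n\sum_{x\in V}(\deg x)^{-2}$.
   Context: The Moran process on $G$ with mutant fitness $r>0$ is the Markov chain $(X_i)_{i\ge0}$ whose state $X_i\subseteq V$ is the set of vertices occupied by mutants; every other vertex is occupied by a non-mutant of fitness $1$. Write $W(S)=r|S|+|V\setminus S|$ for the total fitness. Given $X_i=S$, one step is: choose a vertex $x$ with probability $r/W(S)$ if $x\in S$ and $1/W(S)$ if $x\notin S$; then choose a neighbour $y$ of $x$ uniformly at random; set $X_{i+1}=S\cup\{y\}$ if $x\in S$ and $X_{i+1}=S\setminus\{y\}$ if $x\notin S$. The absorption time is $\min\{i: X_i=\emptyset\text{ or }X_i=V\}$. For $X\subseteq V$, $\phi(X)=\sum_{x\in X}\frac{1}{\deg x}$, and $\phi(G)=\phi(V)$. *)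

theory Defs
  imports "HOL-Probability.Probability"
begin

definition simple_graph :: "'a set \<Rightarrow> ('a \<Rightarrow> 'a \<Rightarrow> bool) \<Rightarrow> bool" where
  "simple_graph V E \<longleftrightarrow> finite V \<and>
     (\<forall>x y. E x y \<longrightarrow> x \<in> V \<and> y \<in> V \<and> E y x \<and> x \<noteq> y)"

definition connected_graph :: "'a set \<Rightarrow> ('a \<Rightarrow> 'a \<Rightarrow> bool) \<Rightarrow> bool" where
  "connected_graph V E \<longleftrightarrow> (\<forall>x\<in>V. \<forall>y\<in>V. E\<^sup>*\<^sup>* x y)"

definition nbrs :: "'a set \<Rightarrow> ('a \<Rightarrow> 'a \<Rightarrow> bool) \<Rightarrow> 'a \<Rightarrow> 'a set" where
  "nbrs V E x = {y \<in> V. E x y}"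

definition deg :: "'a set \<Rightarrow> ('a \<Rightarrow> 'a \<Rightarrow> bool) \<Rightarrow> 'a \<Rightarrow> nat" where
  "deg V E x = card (nbrs V E x)"

definition phi :: "'a set \<Rightarrow> ('a \<Rightarrow> 'a \<Rightarrow> bool) \<Rightarrow> 'a set \<Rightarrow> real" where
  "phi V E X = (\<Sum>x\<in>X. 1 / real (deg V E x))"

definition fitness :: "'a set \<Rightarrow> real \<Rightarrow> 'a set \<Rightarrow> real" where
  "fitness V r S = r * real (card S) + real (card (V - S))"

definition moran_step :: "'a set \<Rightarrow> ('a \<Rightarrow> 'a \<Rightarrow> bool) \<Rightarrow> real \<Rightarrow> 'a set \<Rightarrow> 'a set pmf" where
  "moran_step V E r S =
     bind_pmf
       (embed_pmf (\<lambda>x. if x \<in> V then (if x \<in> S then r else 1) / fitness V r S else 0))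
       (\<lambda>x. map_pmf (\<lambda>y. if x \<in> S then insert y S else S - {y}) (pmf_of_set (nbrs V E x)))"

fun moran_traj :: "'a set \<Rightarrow> ('a \<Rightarrow> 'a \<Rightarrow> bool) \<Rightarrow> real \<Rightarrow> 'a set pmf \<Rightarrow> nat \<Rightarrow> 'a set list pmf" where
  "moran_traj V E r init 0 = map_pmf (\<lambda>S. [S]) init"
| "moran_traj V E r init (Suc i) =
     bind_pmf (moran_traj V E r init i)
       (\<lambda>xs. map_pmf (\<lambda>S. xs @ [S]) (moran_step V E r (last xs)))"

(* Expected absorption time E[T] of T = min{i. X_i = {} or X_i = V},
   via E[T] = sum_{i>=0} P(T > i), where T > i iff X_0, ..., X_i are all
   non-absorbing.  Value in ennreal (may be infinite). *)
definition expected_absorption_time ::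
  "'a set \<Rightarrow> ('a \<Rightarrow> 'a \<Rightarrow> bool) \<Rightarrow> real \<Rightarrow> 'a set pmf \<Rightarrow> ennreal" where
  "expected_absorption_time V E r init =
     (\<Sum>i. ennreal (measure_pmf.prob (moran_traj V E r init i)
                     {xs. \<forall>S\<in>set xs. S \<noteq> {} \<and> S \<noteq> V}))"

end

theory Submission
  imports Defs
begin

locale moran =
  fixes V :: "'a set" and E :: "'a \<Rightarrow> 'a \<Rightarrow> bool"
  assumes sg: "simple_graph V E" and cg: "connected_graph V E" and c2: "card V \<ge> 2"
begin

lemma finV: "finite V" using sg by (simp add: simple_graph_def)

lemma nbrs_sub: "nbrs V E x \<subseteq> V" by (auto simp: nbrs_def)

lemma fin_nbrs: "finite (nbrs V E x)" using finV nbrs_sub finite_subset by blast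

lemma deg_le: "deg V E x \<le> card V"
  unfolding deg_def by (rule card_mono[OF finV nbrs_sub])

lemma nbrs_ne: assumes "x \<in> V" shows "nbrs V E x \<noteq> {}"
proof -
  have "\<exists>y\<in>V. y \<noteq> x"
  proof (rule ccontr)
    assume "\<not> ?thesis" then have "V \<subseteq> {x}" by auto
    then have "card V \<le> 1" using card_mono[of "{x}" V] by simp
    then show False using c2 by simp
  qed
  then obtain y where y: "y \<in> V" "y \<noteq> x" by blast
  have "E\<^sup>*\<^sup>* x y" using cg assms y unfolding connected_graph_def by blast
  then obtain z where "E x z" using y(2) by (metis converse_rtranclpE)
  then have "z \<in> nbrs V E x" using sg unfolding nbrs_def simple_graph_def by auto
  then show ?thesis by auto
qed

lemma deg_pos: "x \<in> V \<Longrightarrow> deg V E x \<ge> 1"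
  using nbrs_ne fin_nbrs unfolding deg_def by (metis One_nat_def Suc_leI card_gt_0_iff)

lemma boundary_aux: "E\<^sup>*\<^sup>* a b \<Longrightarrow> a \<in> S \<Longrightarrow> b \<notin> S \<Longrightarrow> \<exists>u v. E u v \<and> u \<in> S \<and> v \<notin> S"
proof (induction rule: rtranclp_induct)
  case base then show ?case by simp
next
  case (step c d)
  then show ?case by (cases "c \<in> S") auto
qed

lemma boundary: assumes "S \<subseteq> V" "S \<noteq> {}" "S \<noteq> V"
  shows "\<exists>u v. E u v \<and> u \<in> S \<and> v \<in> V \<and> v \<notin> S"
proof -
  obtain a where a: "a \<in> S" using assms by auto
  obtain b where b: "b \<in> V" "b \<notin> S" using assms by auto
  have "E\<^sup>*\<^sup>* a b" using cg a b assms(1) unfolding connected_graph_def by blast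
  then obtain u v where "E u v" "u \<in> S" "v \<notin> S" using boundary_aux a b by blast
  moreover then have "v \<in> V" using sg unfolding simple_graph_def by auto
  ultimately show ?thesis by blast
qed


definition "gg S x y = (if x \<in> S then insert y S else S - {y})"

lemma step_eq: assumes "S \<subseteq> V"
  shows "moran_step V E 1 S = pmf_of_set V \<bind> (\<lambda>x. map_pmf (gg S x) (pmf_of_set (nbrs V E x)))"
proof -
  have fS: "finite S" using assms finV finite_subset by blast
  have fit: "fitness V 1 S = real (card V)"
    unfolding fitness_def using card_Diff_subset[OF fS assms] card_mono[OF finV assms]
    by (simp add: of_nat_diff)
  have Vne: "V \<noteq> {}" using c2 by auto
  have "(\<lambda>x. if x \<in> V then (if x \<in> S then 1 else 1) / fitness V 1 S else 0) = pmf (pmf_of_set V)"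
    using finV Vne by (intro ext) (simp add: fit indicator_def)
  then have "embed_pmf (\<lambda>x. if x \<in> V then (if x \<in> S then 1 else 1) / fitness V 1 S else 0) = pmf_of_set V"
    using type_definition.Rep_inverse[OF td_pmf_embed_pmf] by metis
  then show ?thesis unfolding moran_step_def gg_def by simp
qed

lemma step_set: assumes "S \<subseteq> V" shows "set_pmf (moran_step V E 1 S) \<subseteq> Pow V"
proof -
  have Vne: "V \<noteq> {}" using c2 by auto
  show ?thesis unfolding step_eq[OF assms] using finV Vne nbrs_ne fin_nbrs nbrs_sub assms
    by (auto simp: gg_def split: if_splits)
qed

lemma step_fin: assumes "S \<subseteq> V" shows "finite (set_pmf (moran_step V E 1 S))"
  using step_set[OF assms] finV by (meson finite_Pow_iff finite_subset)

lemma step_exp: assumes "S \<subseteq> V"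
  shows "measure_pmf.expectation (moran_step V E 1 S) f =
     (\<Sum>x\<in>V. (\<Sum>y\<in>nbrs V E x. f (gg S x y)) / real (deg V E x)) / real (card V)"
proof -
  have Vne: "V \<noteq> {}" using c2 by auto
  have "measure_pmf.expectation (moran_step V E 1 S) f =
     (\<Sum>x\<in>V. measure_pmf.expectation (map_pmf (gg S x) (pmf_of_set (nbrs V E x))) f /\<^sub>R real (card V))"
    unfolding step_eq[OF assms]
    by (rule pmf_expectation_bind_pmf_of_set) (use Vne finV nbrs_ne fin_nbrs in auto)
  also have "\<dots> = (\<Sum>x\<in>V. ((\<Sum>y\<in>nbrs V E x. f (gg S x y)) / real (deg V E x)) / real (card V))"
    by (intro sum.cong refl) (simp add: integral_pmf_of_set nbrs_ne fin_nbrs deg_def divide_inverse_commute)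
  finally show ?thesis by (simp add: sum_divide_distrib)
qed


definition "dl S x y = (if x \<in> S \<and> y \<notin> S then 1 / real (deg V E y)
   else if x \<notin> S \<and> y \<in> S then - 1 / real (deg V E y) else 0)"

lemma phi_gg: assumes "S \<subseteq> V" "y \<in> V"
  shows "phi V E (gg S x y) = phi V E S + dl S x y"
proof -
  have fS: "finite S" using assms finV finite_subset by blast
  show ?thesis
  proof (cases "x \<in> S")
    case True
    then show ?thesis using fS by (cases "y \<in> S") (auto simp: gg_def dl_def phi_def insert_absorb)
  next
    case False
    then show ?thesis using fS by (cases "y \<in> S") (auto simp: gg_def dl_def phi_def sum_diff1)
  qed
qed

lemma nb_sum: "(\<Sum>y\<in>nbrs V E x. f y) = (\<Sum>y\<in>V. if E x y then f y else 0)"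
  unfolding nbrs_def using finV by (simp add: sum.inter_filter)

lemma dl_zero: "(\<Sum>x\<in>V. \<Sum>y\<in>nbrs V E x. dl S x y / real (deg V E x)) = 0"
proof -
  define F where "F x y = (if x \<in> S \<and> y \<notin> S then 1 / (real (deg V E x) * real (deg V E y)) else 0)" for x y
  have "(\<Sum>x\<in>V. \<Sum>y\<in>nbrs V E x. dl S x y / real (deg V E x))
      = (\<Sum>x\<in>V. \<Sum>y\<in>nbrs V E x. F x y - F y x)"
    by (intro sum.cong refl) (auto simp: F_def dl_def)
  also have "\<dots> = (\<Sum>x\<in>V. \<Sum>y\<in>V. if E x y then F x y else 0) - (\<Sum>x\<in>V. \<Sum>y\<in>V. if E x y then F y x else 0)"
    by (simp add: nb_sum sum_subtractf if_distrib[of "\<lambda>t. t - _"] if_distrib[of "\<lambda>t. _ - t"] cong: if_cong)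
  also have "(\<Sum>x\<in>V. \<Sum>y\<in>V. if E x y then F y x else 0) = (\<Sum>y\<in>V. \<Sum>x\<in>V. if E x y then F y x else 0)"
    by (rule sum.swap)
  also have "\<dots> = (\<Sum>x\<in>V. \<Sum>y\<in>V. if E x y then F x y else 0)"
    using sg unfolding simple_graph_def by (intro sum.cong refl) metis
  finally show ?thesis by simp
qed

definition "psi S = phi V E S * (phi V E V - phi V E S)"

lemma drift: assumes "S \<subseteq> V" "S \<noteq> {}" "S \<noteq> V"
  shows "measure_pmf.expectation (moran_step V E 1 S) psi \<le> psi S - 1 / real (card V) ^ 4"
proof -
  let ?n = "real (card V)"
  let ?P = "phi V E V" let ?p = "phi V E S"
  define d where "d x = real (deg V E x)" for x
  have dpos: "x \<in> V \<Longrightarrow> d x > 0" for x using deg_pos[of x] by (simp add: d_def)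
  have dle: "d x \<le> ?n" for x using deg_le[of x] by (simp add: d_def)
  have npos: "?n > 0" using c2 by simp
  have pt: "psi (gg S x y) / d x = psi S / d x + (?P - 2 * ?p) * (dl S x y / d x) - (dl S x y)^2 / d x"
    if "x \<in> V" "y \<in> nbrs V E x" for x y
  proof -
    have "y \<in> V" using that nbrs_sub by auto
    then have "psi (gg S x y) = psi S + (?P - 2 * ?p) * dl S x y - (dl S x y)^2"
      unfolding psi_def phi_gg[OF assms(1) \<open>y \<in> V\<close>] by (simp add: algebra_simps power2_eq_square)
    then show ?thesis by (simp add: diff_divide_distrib add_divide_distrib)
  qed
  define Q where "Q = (\<Sum>x\<in>V. \<Sum>y\<in>nbrs V E x. (dl S x y)^2 / d x)"
  have cnt: "(\<Sum>y\<in>nbrs V E x. psi S / d x) = psi S" if "x \<in> V" for x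
    using dpos[OF that] by (simp add: d_def deg_def)
  have "(\<Sum>x\<in>V. (\<Sum>y\<in>nbrs V E x. psi (gg S x y)) / d x)
      = (\<Sum>x\<in>V. \<Sum>y\<in>nbrs V E x. psi (gg S x y) / d x)"
    by (simp add: sum_divide_distrib)
  also have "\<dots> = (\<Sum>x\<in>V. \<Sum>y\<in>nbrs V E x. psi S / d x + (?P - 2 * ?p) * (dl S x y / d x) - (dl S x y)^2 / d x)"
    by (intro sum.cong refl pt) auto
  also have "\<dots> = (\<Sum>x\<in>V. \<Sum>y\<in>nbrs V E x. psi S / d x) + (?P - 2 * ?p) * (\<Sum>x\<in>V. \<Sum>y\<in>nbrs V E x. dl S x y / d x) - Q"
    unfolding Q_def by (simp add: sum.distrib sum_subtractf sum_distrib_left)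
  also have "\<dots> = ?n * psi S - Q"
    using dl_zero[of S] cnt by (simp add: d_def)
  finally have eq: "(\<Sum>x\<in>V. (\<Sum>y\<in>nbrs V E x. psi (gg S x y)) / d x) = ?n * psi S - Q" .
  obtain u v where uv: "E u v" "u \<in> S" "v \<in> V" "v \<notin> S" using boundary[OF assms] by blast
  have uV: "u \<in> V" using uv assms by auto
  have vN: "v \<in> nbrs V E u" using uv by (simp add: nbrs_def)
  have nn: "0 \<le> (\<Sum>y\<in>nbrs V E x. (dl S x y)^2 / d x)" if "x \<in> V" for x
    using dpos[OF that] by (intro sum_nonneg) simp
  have "(dl S u v)^2 / d u \<le> (\<Sum>y\<in>nbrs V E u. (dl S u y)^2 / d u)"
    using dpos[OF uV] fin_nbrs vN by (intro member_le_sum) auto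
  also have "\<dots> \<le> Q" unfolding Q_def using nn uV finV by (intro member_le_sum) auto
  finally have Q1: "(dl S u v)^2 / d u \<le> Q" .
  have "(dl S u v)^2 / d u = 1 / (d u * d v ^ 2)"
    using uv by (simp add: dl_def d_def power2_eq_square)
  moreover have "1 / ?n ^ 3 \<le> 1 / (d u * d v ^ 2)"
  proof -
    have "d u * d v ^ 2 \<le> ?n * ?n ^ 2"
      using dpos[OF uV] dpos[OF uv(3)] dle by (intro mult_mono power_mono) auto
    then show ?thesis using dpos[OF uV] dpos[OF uv(3)] npos
      by (intro divide_left_mono) (auto simp: power3_eq_cube power2_eq_square)
  qed
  ultimately have Qb: "1 / ?n ^ 3 \<le> Q" using Q1 by linarith
  have "measure_pmf.expectation (moran_step V E 1 S) psi = (?n * psi S - Q) / ?n"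
    using step_exp[OF assms(1), of psi] eq by (simp add: d_def)
  also have "\<dots> = psi S - Q / ?n" using npos by (simp add: field_simps)
  also have "\<dots> \<le> psi S - (1 / ?n ^ 3) / ?n" using divide_right_mono[OF Qb, of ?n] npos by simp
  also have "\<dots> = psi S - 1 / ?n ^ 4" by (simp add: power_Suc2 power3_eq_cube numeral_eq_Suc)
  finally show ?thesis .
qed




definition "TT i = {xs. set xs \<subseteq> Pow V \<and> length xs = Suc i}"

lemma TT_fin: "finite (TT i)"
  unfolding TT_def by (rule finite_lists_length_eq) (simp add: finV)

lemma TT_last: "xs \<in> TT i \<Longrightarrow> last xs \<subseteq> V"
proof -
  assume "xs \<in> TT i"
  then have "xs \<noteq> []" "set xs \<subseteq> Pow V" by (auto simp: TT_def)
  moreover from \<open>xs \<noteq> []\<close> have "last xs \<in> set xs" by simp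
  ultimately show ?thesis by blast
qed

lemma traj_set: assumes "set_pmf init \<subseteq> Pow V"
  shows "set_pmf (moran_traj V E 1 init i) \<subseteq> TT i"
proof (induction i)
  case 0 then show ?case using assms by (auto simp: TT_def)
next
  case (Suc i)
  show ?case
  proof
    fix ys assume "ys \<in> set_pmf (moran_traj V E 1 init (Suc i))"
    then obtain xs S where xs: "xs \<in> set_pmf (moran_traj V E 1 init i)" and
      S: "S \<in> set_pmf (moran_step V E 1 (last xs))" and ys: "ys = xs @ [S]" by auto
    have "xs \<in> TT i" using xs Suc by auto
    moreover then have "S \<subseteq> V" using step_set[OF TT_last] S by auto
    ultimately show "ys \<in> TT (Suc i)" using ys by (auto simp: TT_def)
  qed
qed

definition "Ab xs = (\<forall>S\<in>set xs. S \<noteq> {} \<and> S \<noteq> V)"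
definition "hh xs = (if Ab xs then psi (last xs) else 0)"

lemma phi_bounds: "S \<subseteq> V \<Longrightarrow> 0 \<le> phi V E S \<and> phi V E S \<le> phi V E V"
  unfolding phi_def using finV by (auto intro!: sum_nonneg sum_mono2)

lemma psi_nonneg: "S \<subseteq> V \<Longrightarrow> 0 \<le> psi S"
  unfolding psi_def using phi_bounds by auto

lemma exp_TT: assumes "set_pmf M \<subseteq> TT i"
  shows "measure_pmf.expectation M f = (\<Sum>xs\<in>TT i. pmf M xs * f xs)"
  using assms TT_fin by (subst integral_measure_pmf[of "TT i"]) auto



lemma inner: assumes "xs \<in> TT i"
  shows "measure_pmf.expectation (moran_step V E 1 (last xs)) (\<lambda>S. hh (xs @ [S]))
     \<le> hh xs - 1 / real (card V) ^ 4 * indicator {xs. Ab xs} xs"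
proof (cases "Ab xs")
  case False
  then have "(\<lambda>S. hh (xs @ [S])) = (\<lambda>_. 0)" by (intro ext) (auto simp: hh_def Ab_def)
  then show ?thesis using False by (simp add: hh_def)
next
  case True
  let ?L = "last xs"
  have LV: "?L \<subseteq> V" using TT_last[OF assms] .
  have xne: "xs \<noteq> []" using assms by (auto simp: TT_def)
  then have Lin: "?L \<in> set xs" by simp
  have Lna: "?L \<noteq> {}" "?L \<noteq> V" using True Lin by (auto simp: Ab_def)
  have psi0: "psi {} = 0" "psi V = 0" by (auto simp: psi_def phi_def)
  have "measure_pmf.expectation (moran_step V E 1 ?L) (\<lambda>S. hh (xs @ [S]))
      = measure_pmf.expectation (moran_step V E 1 ?L) psi"
    unfolding step_exp[OF LV]
    by (intro arg_cong[where f="\<lambda>t. t / _"] sum.cong refl arg_cong[where f="\<lambda>t. t / _"])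
       (use True psi0 in \<open>auto simp: hh_def Ab_def\<close>)
  also have "\<dots> \<le> psi ?L - 1 / real (card V) ^ 4" by (rule drift[OF LV Lna])
  finally show ?thesis using True by (simp add: hh_def)
qed




lemma prob_exp: "measure_pmf.prob M A = measure_pmf.expectation M (indicator A)"
  by (simp add: measure_pmf.emeasure_eq_measure)

lemma recur: assumes "set_pmf init \<subseteq> Pow V"
  shows "measure_pmf.expectation (moran_traj V E 1 init (Suc i)) hh
    \<le> measure_pmf.expectation (moran_traj V E 1 init i) hh
       - 1 / real (card V) ^ 4 * measure_pmf.expectation (moran_traj V E 1 init i) (indicator {xs. Ab xs})"
proof -
  let ?M = "moran_traj V E 1 init i"
  let ?c = "1 / real (card V) ^ 4"
  let ?I = "indicator {xs. Ab xs} :: _ \<Rightarrow> real"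
  have MS: "set_pmf ?M \<subseteq> TT i" by (rule traj_set[OF assms])
  have fin: "finite (set_pmf (map_pmf (\<lambda>S. a @ [S]) (moran_step V E 1 (last a))))" if "a \<in> TT i" for a
    using step_fin[OF TT_last[OF that]] by simp
  have "measure_pmf.expectation (moran_traj V E 1 init (Suc i)) hh
     = measure_pmf.expectation (?M \<bind> (\<lambda>a. map_pmf (\<lambda>S. a @ [S]) (moran_step V E 1 (last a)))) hh"
    by (simp only: moran_traj.simps)
  also have "\<dots> = (\<Sum>a\<in>TT i. pmf ?M a *\<^sub>R measure_pmf.expectation (map_pmf (\<lambda>S. a @ [S]) (moran_step V E 1 (last a))) hh)"
    by (rule pmf_expectation_bind[OF TT_fin fin MS])
  also have "\<dots> = (\<Sum>a\<in>TT i. pmf ?M a * measure_pmf.expectation (moran_step V E 1 (last a)) (\<lambda>S. hh (a @ [S])))"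
    by (intro sum.cong refl) (simp only: integral_map_pmf real_scaleR_def)
  also have "\<dots> \<le> (\<Sum>a\<in>TT i. pmf ?M a * (hh a - ?c * ?I a))"
  proof (rule sum_mono)
    fix a assume a: "a \<in> TT i"
    show "pmf ?M a * measure_pmf.expectation (moran_step V E 1 (last a)) (\<lambda>S. hh (a @ [S]))
        \<le> pmf ?M a * (hh a - ?c * ?I a)"
      by (rule mult_left_mono[OF inner[OF a] pmf_nonneg])
  qed
  also have "\<dots> = (\<Sum>a\<in>TT i. pmf ?M a * hh a - ?c * (pmf ?M a * ?I a))"
    by (intro sum.cong refl) (simp only: right_diff_distrib mult.left_commute)
  also have "\<dots> = (\<Sum>a\<in>TT i. pmf ?M a * hh a) - ?c * (\<Sum>a\<in>TT i. pmf ?M a * ?I a)"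
    by (simp only: sum_subtractf sum_distrib_left)
  also have "\<dots> = measure_pmf.expectation ?M hh - ?c * measure_pmf.expectation ?M ?I"
    by (simp only: exp_TT[OF MS])
  finally show ?thesis .
qed

lemma u_nonneg: assumes "set_pmf init \<subseteq> Pow V"
  shows "0 \<le> measure_pmf.expectation (moran_traj V E 1 init m) hh"
  unfolding exp_TT[OF traj_set[OF assms]]
  by (intro sum_nonneg mult_nonneg_nonneg) (auto simp: hh_def psi_nonneg TT_last)

lemma tele: assumes "set_pmf init \<subseteq> Pow V"
  shows "1 / real (card V) ^ 4 * (\<Sum>j<m. measure_pmf.expectation (moran_traj V E 1 init j) (indicator {xs. Ab xs}))
    \<le> measure_pmf.expectation (moran_traj V E 1 init 0) hh - measure_pmf.expectation (moran_traj V E 1 init m) hh"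
proof (induction m)
  case 0 then show ?case by simp
next
  case (Suc m)
  then show ?case using recur[OF assms, of m] by (simp only: sum.lessThan_Suc distrib_left)
qed



lemma final:
  shows "expected_absorption_time V E 1 (map_pmf (\<lambda>x. {x}) (pmf_of_set V))
     \<le> ennreal (real (card V) ^ 4 *
          ((phi V E V)\<^sup>2 - (1 / real (card V)) * (\<Sum>x\<in>V. 1 / (real (deg V E x))\<^sup>2)))"
proof -
  let ?init = "map_pmf (\<lambda>x. {x}) (pmf_of_set V)"
  let ?n = "real (card V)"
  let ?P = "phi V E V"
  let ?Q = "(\<Sum>x\<in>V. 1 / (real (deg V E x))\<^sup>2)"
  have Vne: "V \<noteq> {}" using c2 by auto
  have npos: "?n > 0" using c2 by simp
  have ini: "set_pmf ?init \<subseteq> Pow V" using finV Vne by auto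
  have "measure_pmf.expectation (moran_traj V E 1 ?init 0) hh = (\<Sum>x\<in>V. hh [{x}]) / ?n"
    using finV Vne by (simp add: integral_pmf_of_set)
  also have "\<dots> \<le> (\<Sum>x\<in>V. psi {x}) / ?n"
    using npos psi_nonneg finV
    by (intro divide_right_mono sum_mono) (auto simp: hh_def)
  also have "(\<Sum>x\<in>V. psi {x}) = (\<Sum>x\<in>V. ?P * (1 / real (deg V E x)) - 1 / (real (deg V E x))\<^sup>2)"
    by (intro sum.cong refl) (simp add: psi_def phi_def algebra_simps power2_eq_square)
  also have "\<dots> = (\<Sum>x\<in>V. ?P * (1 / real (deg V E x))) - ?Q"
    by (simp only: sum_subtractf)
  also have "(\<Sum>x\<in>V. ?P * (1 / real (deg V E x))) = ?P * ?P"
    by (simp only: sum_distrib_left[symmetric] phi_def)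
  finally have u0: "measure_pmf.expectation (moran_traj V E 1 ?init 0) hh \<le> (?P * ?P - ?Q) / ?n" .
  have Qnn: "0 \<le> ?Q" by (intro sum_nonneg) simp
  have "(?P * ?P - ?Q) / ?n \<le> ?P\<^sup>2 - ?Q / ?n"
  proof -
    have x: "0 \<le> ?P * ?P" by simp
    have "?P * ?P \<le> ?P * ?P * ?n" using x c2 by (simp add: mult_le_cancel_left1)
    then have "?P * ?P / ?n \<le> ?P * ?P" using npos by (simp add: pos_divide_le_eq)
    then show ?thesis by (simp add: diff_divide_distrib power2_eq_square)
  qed
  with u0 have u0': "measure_pmf.expectation (moran_traj V E 1 ?init 0) hh \<le> ?P\<^sup>2 - 1 / ?n * ?Q" by simp
  define p where "p j = measure_pmf.prob (moran_traj V E 1 ?init j) {xs. Ab xs}" for j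
  have psum: "(\<Sum>j<m. p j) \<le> ?n ^ 4 * (?P\<^sup>2 - 1 / ?n * ?Q)" for m
  proof -
    have "1 / ?n ^ 4 * (\<Sum>j<m. p j) \<le> ?P\<^sup>2 - 1 / ?n * ?Q"
      using tele[OF ini, of m] u_nonneg[OF ini, of m] u0' unfolding p_def prob_exp by linarith
    then show ?thesis using npos by (simp add: field_simps)
  qed
  have eqA: "{xs. \<forall>S\<in>set xs. S \<noteq> {} \<and> S \<noteq> V} = {xs. Ab xs}" by (simp add: Ab_def)
  have "expected_absorption_time V E 1 ?init = (\<Sum>j. ennreal (p j))"
    unfolding expected_absorption_time_def p_def eqA ..
  also have "\<dots> \<le> ennreal (?n ^ 4 * (?P\<^sup>2 - 1 / ?n * ?Q))"
  proof (rule suminf_le_const)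
    show "summable (\<lambda>j. ennreal (p j))" by simp
    fix m
    have "(\<Sum>j<m. ennreal (p j)) = ennreal (\<Sum>j<m. p j)" by (rule sum_ennreal) (simp add: p_def)
    also have "\<dots> \<le> ennreal (?n ^ 4 * (?P\<^sup>2 - 1 / ?n * ?Q))" by (rule ennreal_leI[OF psum])
    finally show "(\<Sum>j<m. ennreal (p j)) \<le> ennreal (?n ^ 4 * (?P\<^sup>2 - 1 / ?n * ?Q))" .
  qed
  finally show ?thesis by simp
qed

end

theorem theorem9:
  fixes V :: "'a set" and E :: "'a \<Rightarrow> 'a \<Rightarrow> bool"
  assumes "simple_graph V E"
    and "connected_graph V E"
    and "card V \<ge> 2"
  shows "expected_absorption_time V E 1 (map_pmf (\<lambda>x. {x}) (pmf_of_set V))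
     \<le> ennreal (real (card V) ^ 4 *
          ((phi V E V)\<^sup>2 - (1 / real (card V)) * (\<Sum>x\<in>V. 1 / (real (deg V E x))\<^sup>2)))"
  by (rule moran.final[OF moran.intro[OF assms(1) assms(2) assms(3)]])

end
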